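(* Let $\Gamma=(V,E)$ be a connected $G$-locally arc-transitive graph (with $G\leqslant\mathrm{Aut}(\Gamma)$), let $\{\alpha,\beta\}\in E$ and let $N\unlhd G$. Suppose that $\gcd(|N_\alpha|,|\Gamma(\alpha)|)=1=\gcd(|N_\beta|,|\Gamma(\beta)|)$. Then $N$ is semiregular on $V$.
   Context: Graphs are finite, simple and undirected. $N_\gamma$ is the stabilizer in $N$ of a vertex $\gamma$ and $\Gamma(\gamma)$ its set of neighbours. $\Gamma$ is $G$-locally arc-transitive if for every vertex $\gamma$ the stabilizer $G_\gamma$ acts transitively on $\Gamma(\gamma)$. $N$ is semiregular on $V$ if $N_\gamma=1$ for all $\gamma\in V$. *)

theory Defs
  imports "HOL-Algebra.Algebra"
begin

definition simple_graph :: "'v set \<Rightarrow> ('v \<Rightarrow> 'v \<Rightarrow> bool) \<Rightarrow> bool" where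
  "simple_graph V E \<longleftrightarrow> finite V \<and> (\<forall>u w. E u w \<longrightarrow> u \<in> V \<and> w \<in> V)
     \<and> (\<forall>u w. E u w \<longrightarrow> E w u) \<and> (\<forall>u. \<not> E u u)"

definition graph_connected :: "'v set \<Rightarrow> ('v \<Rightarrow> 'v \<Rightarrow> bool) \<Rightarrow> bool" where
  "graph_connected V E \<longleftrightarrow> (\<forall>u\<in>V. \<forall>w\<in>V. E\<^sup>*\<^sup>* u w)"

definition nbrs :: "'v set \<Rightarrow> ('v \<Rightarrow> 'v \<Rightarrow> bool) \<Rightarrow> 'v \<Rightarrow> 'v set" where
  "nbrs V E x = {w \<in> V. E x w}"

definition graph_aut :: "'v set \<Rightarrow> ('v \<Rightarrow> 'v \<Rightarrow> bool) \<Rightarrow> ('v \<Rightarrow> 'v) set" where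
  "graph_aut V E = {g \<in> Bij V. \<forall>u\<in>V. \<forall>w\<in>V. E u w \<longleftrightarrow> E (g u) (g w)}"

definition perm_grp :: "'v set \<Rightarrow> ('v \<Rightarrow> 'v) set \<Rightarrow> ('v \<Rightarrow> 'v) monoid" where
  "perm_grp V H = (BijGroup V)\<lparr>carrier := H\<rparr>"

definition stab :: "('v \<Rightarrow> 'v) set \<Rightarrow> 'v \<Rightarrow> ('v \<Rightarrow> 'v) set" where
  "stab H x = {g \<in> H. g x = x}"

definition locally_arc_transitive ::
  "'v set \<Rightarrow> ('v \<Rightarrow> 'v \<Rightarrow> bool) \<Rightarrow> ('v \<Rightarrow> 'v) set \<Rightarrow> bool" where
  "locally_arc_transitive V E G \<longleftrightarrow>
     (\<forall>x\<in>V. \<forall>u\<in>nbrs V E x. \<forall>w\<in>nbrs V E x. \<exists>g\<in>stab G x. g u = w)"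

definition semiregular :: "'v set \<Rightarrow> ('v \<Rightarrow> 'v) set \<Rightarrow> bool" where
  "semiregular V N \<longleftrightarrow> (\<forall>x\<in>V. stab N x = {\<one>\<^bsub>BijGroup V\<^esub>})"

end

theory Submission
  imports Defs
begin

lemma B_carrier: "carrier (BijGroup V) = Bij V"
  by (simp add: BijGroup_def)

lemma B_mult: "f \<in> Bij V \<Longrightarrow> g \<in> Bij V \<Longrightarrow> x \<in> V \<Longrightarrow> (f \<otimes>\<^bsub>BijGroup V\<^esub> g) x = f (g x)"
  by (simp add: BijGroup_def compose_def)

lemma B_one: "\<one>\<^bsub>BijGroup V\<^esub> = (\<lambda>x\<in>V. x)"
  by (simp add: BijGroup_def)

lemma B_mem: "f \<in> Bij V \<Longrightarrow> x \<in> V \<Longrightarrow> f x \<in> V"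
  by (auto simp: Bij_def bij_betw_def)

lemma B_inj: "f \<in> Bij V \<Longrightarrow> inj_on f V"
  by (auto simp: Bij_def bij_betw_def)

lemma B_inv1: "f \<in> Bij V \<Longrightarrow> x \<in> V \<Longrightarrow> (inv\<^bsub>BijGroup V\<^esub> f) (f x) = x"
  by (simp add: inv_BijGroup B_mem Bij_def bij_betw_def)

lemma B_inv2: "f \<in> Bij V \<Longrightarrow> y \<in> V \<Longrightarrow> f ((inv\<^bsub>BijGroup V\<^esub> f) y) = y"
  by (simp add: inv_BijGroup Bij_def bij_betw_def f_inv_into_f)

lemma B_inv3: "f \<in> Bij V \<Longrightarrow> y \<in> V \<Longrightarrow> (inv\<^bsub>BijGroup V\<^esub> f) y \<in> V"
  by (simp add: inv_BijGroup Bij_inv_into_mem)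

lemma B_invB: "f \<in> Bij V \<Longrightarrow> inv\<^bsub>BijGroup V\<^esub> f \<in> Bij V"
  by (metis B_carrier group.inv_closed group_BijGroup)

lemma B_multB: "f \<in> Bij V \<Longrightarrow> g \<in> Bij V \<Longrightarrow> f \<otimes>\<^bsub>BijGroup V\<^esub> g \<in> Bij V"
  by (metis B_carrier group.subgroup_self subgroup.m_closed group_BijGroup)

lemma conj_closed:
  assumes G: "subgroup G (BijGroup V)" and N: "N \<lhd> perm_grp V G"
    and g: "g \<in> G" and h: "h \<in> N"
  shows "g \<otimes>\<^bsub>BijGroup V\<^esub> h \<otimes>\<^bsub>BijGroup V\<^esub> inv\<^bsub>BijGroup V\<^esub> g \<in> N"
    and "inv\<^bsub>BijGroup V\<^esub> g \<otimes>\<^bsub>BijGroup V\<^esub> h \<otimes>\<^bsub>BijGroup V\<^esub> g \<in> N"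
proof -
  have c: "carrier (perm_grp V G) = G" by (simp add: perm_grp_def)
  have m: "monoid.mult (perm_grp V G) = monoid.mult (BijGroup V)" by (simp add: perm_grp_def)
  have i: "inv\<^bsub>perm_grp V G\<^esub> g = inv\<^bsub>BijGroup V\<^esub> g"
    unfolding perm_grp_def using group.m_inv_consistent[OF group_BijGroup G g] .
  show "g \<otimes>\<^bsub>BijGroup V\<^esub> h \<otimes>\<^bsub>BijGroup V\<^esub> inv\<^bsub>BijGroup V\<^esub> g \<in> N"
    using normal.inv_op_closed2[OF N, of g h] c m i g h by simp
  show "inv\<^bsub>BijGroup V\<^esub> g \<otimes>\<^bsub>BijGroup V\<^esub> h \<otimes>\<^bsub>BijGroup V\<^esub> g \<in> N"
    using normal.inv_op_closed1[OF N, of g h] c m i g h by simp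
qed

lemma N_sub:
  assumes N: "N \<lhd> perm_grp V G"
  shows "N \<subseteq> G" "\<one>\<^bsub>BijGroup V\<^esub> \<in> N"
proof -
  have s: "subgroup N (perm_grp V G)" using N normal_imp_subgroup by blast
  show "N \<subseteq> G" using subgroup.subset[OF s] by (simp add: perm_grp_def)
  show "\<one>\<^bsub>BijGroup V\<^esub> \<in> N" using subgroup.one_closed[OF s] by (simp add: perm_grp_def)
qed

lemma stab_subgroup:
  assumes G: "subgroup G (BijGroup V)" and N: "N \<lhd> perm_grp V G" and gV: "\<gamma> \<in> V"
  shows "subgroup (stab N \<gamma>) (BijGroup V)"
proof -
  have s: "subgroup N (perm_grp V G)" using N normal_imp_subgroup by blast
  have NG: "N \<subseteq> G" using N_sub[OF N] by simp
  have GB: "G \<subseteq> Bij V" using subgroup.subset[OF G] by (simp add: B_carrier)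
  have mc: "a \<otimes>\<^bsub>BijGroup V\<^esub> b \<in> N" if "a \<in> N" "b \<in> N" for a b
    using subgroup.m_closed[OF s that] by (simp add: perm_grp_def)
  have ic: "inv\<^bsub>BijGroup V\<^esub> a \<in> N" if "a \<in> N" for a
  proof -
    have "inv\<^bsub>perm_grp V G\<^esub> a = inv\<^bsub>BijGroup V\<^esub> a"
      unfolding perm_grp_def using group.m_inv_consistent[OF group_BijGroup G] that NG by blast
    then show ?thesis using subgroup.m_inv_closed[OF s that] by simp
  qed
  show ?thesis
  proof (rule group.subgroupI[OF group_BijGroup])
    show "stab N \<gamma> \<subseteq> carrier (BijGroup V)" using NG GB by (auto simp: stab_def B_carrier)
    show "stab N \<gamma> \<noteq> {}" using N_sub[OF N] gV by (auto simp: stab_def B_one)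
    fix a assume a: "a \<in> stab N \<gamma>"
    then have aB: "a \<in> Bij V" using NG GB by (auto simp: stab_def)
    have "(inv\<^bsub>BijGroup V\<^esub> a) \<gamma> = \<gamma>"
      using B_inv1[OF aB gV] a by (simp add: stab_def)
    then show "inv\<^bsub>BijGroup V\<^esub> a \<in> stab N \<gamma>" using ic a by (simp add: stab_def)
    fix b assume b: "b \<in> stab N \<gamma>"
    then have bB: "b \<in> Bij V" using NG GB by (auto simp: stab_def)
    show "a \<otimes>\<^bsub>BijGroup V\<^esub> b \<in> stab N \<gamma>"
      using mc a b B_mult[OF aB bB gV] by (simp add: stab_def)
  qed
qed

lemma local_fix:
  assumes fin: "finite V" and G: "subgroup G (BijGroup V)" and aut: "G \<subseteq> graph_aut V E"
    and N: "N \<lhd> perm_grp V G" and gV: "\<gamma> \<in> V"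
    and lat: "\<forall>u\<in>nbrs V E \<gamma>. \<forall>w\<in>nbrs V E \<gamma>. \<exists>g\<in>stab G \<gamma>. g u = w"
    and gcd: "gcd (card (stab N \<gamma>)) (card (nbrs V E \<gamma>)) = 1"
    and h: "h \<in> stab N \<gamma>" and u: "u \<in> nbrs V E \<gamma>"
  shows "h u = u"
proof -
  define H where "H = stab N \<gamma>"
  define B where "B = BijGroup V"
  define Ga where "Ga = nbrs V E \<gamma>"
  have NG: "N \<subseteq> G" using N_sub[OF N] by simp
  have GB: "G \<subseteq> Bij V" using subgroup.subset[OF G] by (simp add: B_carrier)
  have HB: "H \<subseteq> Bij V" using NG GB by (auto simp: H_def stab_def)
  have subH: "subgroup H B" unfolding H_def B_def by (rule stab_subgroup[OF G N gV])
  have autg: "\<And>g x y. g \<in> G \<Longrightarrow> x \<in> V \<Longrightarrow> y \<in> V \<Longrightarrow> E x y \<longleftrightarrow> E (g x) (g y)"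
    using aut by (auto simp: graph_aut_def)
  have GaV: "Ga \<subseteq> V" by (auto simp: Ga_def nbrs_def)
  have act: "group_action (perm_grp V H) V (\<lambda>g. g)"
  proof -
    have "group (perm_grp V H)" unfolding perm_grp_def
      using subgroup.subgroup_is_group[OF subH[unfolded B_def] group_BijGroup] .
    moreover have "(\<lambda>g. g) \<in> hom (perm_grp V H) (BijGroup V)"
      using HB by (auto simp: hom_def perm_grp_def B_carrier)
    ultimately show ?thesis
      by (simp add: group_action_def group_hom_def group_hom_axioms_def group_BijGroup)
  qed
  define Orb where "Orb x = {g x | g. g \<in> H}" for x
  have OrbEq: "Orb x = orbit (perm_grp V H) (\<lambda>g. g) x" for x
    by (simp add: Orb_def orbit_def perm_grp_def)
  have dvdH: "card (Orb x) dvd card H" if "x \<in> V" for x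
  proof -
    have "card (Orb x) * card (stabilizer (perm_grp V H) (\<lambda>g. g) x) = card H"
      using group_action.orbit_stabilizer_theorem[OF act that]
      by (simp add: OrbEq order_def perm_grp_def)
    then show ?thesis by (metis dvd_triv_left)
  qed
  have OGa: "Orb x \<subseteq> Ga" if "x \<in> Ga" for x
  proof
    fix y assume "y \<in> Orb x"
    then obtain g where g: "g \<in> H" "y = g x" by (auto simp: Orb_def)
    have gG: "g \<in> G" "g \<gamma> = \<gamma>" using g NG by (auto simp: H_def stab_def)
    have "E \<gamma> x" "x \<in> V" using that by (auto simp: Ga_def nbrs_def)
    then have "E \<gamma> (g x)" using autg[OF gG(1) gV] gG by simp
    moreover have "g x \<in> V" using B_mem[of g V x] g HB \<open>x \<in> V\<close> by auto
    ultimately show "y \<in> Ga" using g by (simp add: Ga_def nbrs_def)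
  qed
  have xO: "x \<in> Orb x" if "x \<in> V" for x
  proof -
    have "\<one>\<^bsub>BijGroup V\<^esub> \<in> H" using subgroup.one_closed[OF subH] by (simp add: B_def)
    then show ?thesis using that unfolding Orb_def by (auto simp: B_one intro!: exI[of _ "\<lambda>x\<in>V. x"])
  qed
  have cle: "card (Orb x) \<le> card (Orb y)" if xy: "x \<in> Ga" "y \<in> Ga" for x y
  proof -
    obtain g where g: "g \<in> stab G \<gamma>" "g x = y" using lat xy unfolding Ga_def by blast
    have gG: "g \<in> G" "g \<gamma> = \<gamma>" using g by (auto simp: stab_def)
    have gB: "g \<in> Bij V" using gG GB by auto
    have xV: "x \<in> V" "y \<in> V" using that GaV by auto
    have "g ` Orb x \<subseteq> Orb y"
    proof
      fix z assume "z \<in> g ` Orb x"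
      then obtain k where k: "k \<in> H" "z = g (k x)" by (auto simp: Orb_def)
      have kB: "k \<in> Bij V" using k HB by auto
      define k' where "k' = g \<otimes>\<^bsub>BijGroup V\<^esub> k \<otimes>\<^bsub>BijGroup V\<^esub> inv\<^bsub>BijGroup V\<^esub> g"
      have kN: "k' \<in> N" unfolding k'_def using conj_closed(1)[OF G N gG(1)] k by (auto simp: H_def stab_def)
      have ev: "k' w = g (k ((inv\<^bsub>BijGroup V\<^esub> g) w))" if "w \<in> V" for w
        unfolding k'_def
        using B_mult[OF B_multB[OF gB kB] B_invB[OF gB] that] B_mult[OF gB kB B_inv3[OF gB that]]
        by simp
      have "(inv\<^bsub>BijGroup V\<^esub> g) \<gamma> = \<gamma>" using B_inv1[OF gB gV] gG by simp
      then have "k' \<gamma> = \<gamma>" using ev[OF gV] gG k by (simp add: H_def stab_def)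
      then have "k' \<in> H" using kN by (simp add: H_def stab_def)
      moreover have "k' y = z" using ev[OF xV(2)] k g(2) B_inv1[OF gB xV(1)] by simp
      ultimately show "z \<in> Orb y" unfolding Orb_def by blast
    qed
    moreover have "inj_on g (Orb x)"
      using B_inj[OF gB] OGa[OF that(1)] GaV by (meson inj_on_subset order_trans)
    moreover have "finite (Orb y)" using OGa[OF that(2)] GaV fin by (meson finite_subset order_trans)
    ultimately show ?thesis by (metis card_inj_on_le)
  qed
  define C where "C = Orb ` Ga"
  have UC: "\<Union>C = Ga" unfolding C_def using OGa xO GaV by blast
  have finGa: "finite Ga" using GaV fin finite_subset by blast
  have uGa: "u \<in> Ga" using u by (simp add: Ga_def)
  have kC: "\<forall>c\<in>C. card c = card (Orb u)" using cle uGa by (auto simp: C_def intro: antisym)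
  have dj: "\<forall>c1\<in>C. \<forall>c2\<in>C. c1 \<noteq> c2 \<longrightarrow> c1 \<inter> c2 = {}"
  proof (intro ballI impI)
    fix c1 c2 assume "c1 \<in> C" "c2 \<in> C" "c1 \<noteq> c2"
    moreover have "c \<in> orbits (perm_grp V H) V (\<lambda>g. g)" if "c \<in> C" for c
      using that GaV by (auto simp: C_def orbits_def OrbEq)
    ultimately show "c1 \<inter> c2 = {}" using group_action.disjoint_union[OF act] by blast
  qed
  have "card (Orb u) * card C = card Ga"
  proof (rule card_partition[of C "card (Orb u)", unfolded UC])
    show "finite C" using finGa by (simp add: C_def)
  qed (use finGa kC dj in auto)
  then have d1: "card (Orb u) dvd card Ga" by (metis dvd_triv_left)
  have d2: "card (Orb u) dvd card H" using dvdH uGa GaV by auto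
  have "card (Orb u) = 1" using d1 d2 gcd unfolding H_def Ga_def
    by (metis gcd_greatest nat_dvd_1_iff_1)
  moreover have "u \<in> Orb u" using xO uGa GaV by auto
  moreover have "h u \<in> Orb u" using h by (auto simp: Orb_def H_def)
  ultimately show ?thesis by (metis card_1_singletonE singletonD)
qed

lemma fix_transfer:
  assumes G: "subgroup G (BijGroup V)" and aut: "G \<subseteq> graph_aut V E"
    and N: "N \<lhd> perm_grp V G" and gV: "\<gamma> \<in> V" and g: "g \<in> G"
    and fx: "\<forall>h\<in>stab N \<gamma>. \<forall>d\<in>nbrs V E \<gamma>. h d = d"
  shows "\<forall>h\<in>stab N (g \<gamma>). \<forall>d\<in>nbrs V E (g \<gamma>). h d = d"
proof (intro ballI)
  fix h d assume h: "h \<in> stab N (g \<gamma>)" and d: "d \<in> nbrs V E (g \<gamma>)"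
  have NG: "N \<subseteq> G" using N_sub[OF N] by simp
  have GB: "G \<subseteq> Bij V" using subgroup.subset[OF G] by (simp add: B_carrier)
  have gB: "g \<in> Bij V" using g GB by auto
  have hB: "h \<in> Bij V" using h NG GB by (auto simp: stab_def)
  have autg: "E x y \<longleftrightarrow> E (g x) (g y)" if "x \<in> V" "y \<in> V" for x y
    using aut g that by (auto simp: graph_aut_def)
  define h' where "h' = inv\<^bsub>BijGroup V\<^esub> g \<otimes>\<^bsub>BijGroup V\<^esub> h \<otimes>\<^bsub>BijGroup V\<^esub> g"
  have hN: "h' \<in> N" unfolding h'_def using conj_closed(2)[OF G N g] h by (auto simp: stab_def)
  have ev: "h' w = (inv\<^bsub>BijGroup V\<^esub> g) (h (g w))" if "w \<in> V" for w
    unfolding h'_def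
    using B_mult[OF B_multB[OF B_invB[OF gB] hB] gB that] B_mult[OF B_invB[OF gB] hB B_mem[OF gB that]]
    by simp
  have "h' \<gamma> = \<gamma>" using ev[OF gV] h B_inv1[OF gB gV] by (simp add: stab_def)
  then have h'S: "h' \<in> stab N \<gamma>" using hN by (simp add: stab_def)
  have dV: "d \<in> V" "E (g \<gamma>) d" using d by (auto simp: nbrs_def)
  define x where "x = (inv\<^bsub>BijGroup V\<^esub> g) d"
  have xV: "x \<in> V" and gx: "g x = d" using B_inv3[OF gB dV(1)] B_inv2[OF gB dV(1)] by (auto simp: x_def)
  have "E \<gamma> x" using autg[OF gV xV] gx dV by simp
  then have "h' x = x" using fx h'S xV by (auto simp: nbrs_def)
  then have "(inv\<^bsub>BijGroup V\<^esub> g) (h d) = x" using ev[OF xV] gx by simp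
  then have "g ((inv\<^bsub>BijGroup V\<^esub> g) (h d)) = d" using gx by simp
  moreover have "h d \<in> V" using B_mem[OF hB dV(1)] .
  ultimately show "h d = d" using B_inv2[OF gB] by simp
qed

lemma orbit_cover:
  assumes sg: "simple_graph V E" and con: "graph_connected V E"
    and G: "subgroup G (BijGroup V)" and aut: "G \<subseteq> graph_aut V E"
    and lat: "locally_arc_transitive V E G" and ab: "E \<alpha> \<beta>" and v: "v \<in> V"
  shows "\<exists>g\<in>G. v = g \<alpha> \<or> v = g \<beta>"
proof -
  have GB: "G \<subseteq> Bij V" using subgroup.subset[OF G] by (simp add: B_carrier)
  have aV: "\<alpha> \<in> V" "\<beta> \<in> V" using sg ab by (auto simp: simple_graph_def)
  have ba: "E \<beta> \<alpha>" using sg ab by (auto simp: simple_graph_def)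
  have autg: "E x y \<longleftrightarrow> E (g x) (g y)" if "g \<in> G" "x \<in> V" "y \<in> V" for g x y
    using aut that by (auto simp: graph_aut_def)
  have stp: "\<exists>g'\<in>G. d = g' b'" if g: "g \<in> G" and ed: "E (g a) d" and ea: "E a b'"
    and aV': "a \<in> V" "b' \<in> V" for g a b' d
  proof -
    have gB: "g \<in> Bij V" using g GB by auto
    have dV: "d \<in> V" using sg ed by (auto simp: simple_graph_def)
    define x where "x = (inv\<^bsub>BijGroup V\<^esub> g) d"
    have xV: "x \<in> V" and gx: "g x = d" using B_inv3[OF gB dV] B_inv2[OF gB dV] by (auto simp: x_def)
    have "E a x" using autg[OF g aV'(1) xV] gx ed by simp
    moreover have "\<forall>u\<in>nbrs V E a. \<forall>w\<in>nbrs V E a. \<exists>g\<in>stab G a. g u = w"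
      using lat aV' by (simp add: locally_arc_transitive_def)
    ultimately have "\<exists>k\<in>stab G a. k b' = x" using aV' ea xV by (simp add: nbrs_def)
    then obtain k where k: "k \<in> stab G a" "k b' = x" by blast
    have kB: "k \<in> Bij V" using k GB by (auto simp: stab_def)
    have "(g \<otimes>\<^bsub>BijGroup V\<^esub> k) b' = d" using B_mult[OF gB kB aV'(2)] k gx by simp
    moreover have "g \<otimes>\<^bsub>BijGroup V\<^esub> k \<in> G" using subgroup.m_closed[OF G g] k by (auto simp: stab_def)
    ultimately show ?thesis by metis
  qed
  have "E\<^sup>*\<^sup>* \<alpha> v" using con aV v by (auto simp: graph_connected_def)
  then show ?thesis
  proof (induction rule: rtranclp_induct)
    case base
    have "\<one>\<^bsub>BijGroup V\<^esub> \<in> G" using subgroup.one_closed[OF G] .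
    then show ?case using aV by (auto simp: B_one intro!: bexI[of _ "\<lambda>x\<in>V. x"])
  next
    case (step y z)
    then obtain g where g: "g \<in> G" "y = g \<alpha> \<or> y = g \<beta>" by blast
    from g(2) show ?case
    proof
      assume "y = g \<alpha>"
      then show ?thesis using stp[OF g(1) _ ab aV] step(2) by blast
    next
      assume "y = g \<beta>"
      then show ?thesis using stp[OF g(1) _ ba aV(2) aV(1)] step(2) by blast
    qed
  qed
qed

theorem lemma2p4:
  fixes V :: "'v set" and E :: "'v \<Rightarrow> 'v \<Rightarrow> bool"
    and G N :: "('v \<Rightarrow> 'v) set" and \<alpha> \<beta> :: 'v
  assumes "simple_graph V E"
    and "graph_connected V E"
    and "subgroup G (BijGroup V)"
    and "G \<subseteq> graph_aut V E"
    and "locally_arc_transitive V E G"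
    and "E \<alpha> \<beta>"
    and "N \<lhd> perm_grp V G"
    and "gcd (card (stab N \<alpha>)) (card (nbrs V E \<alpha>)) = 1"
    and "gcd (card (stab N \<beta>)) (card (nbrs V E \<beta>)) = 1"
  shows "semiregular V N"
proof -
  note sg = assms(1) and con = assms(2) and G = assms(3) and aut = assms(4)
    and lat = assms(5) and ab = assms(6) and N = assms(7)
  have fin: "finite V" using sg by (simp add: simple_graph_def)
  have aV: "\<alpha> \<in> V" "\<beta> \<in> V" using sg ab by (auto simp: simple_graph_def)
  have NG: "N \<subseteq> G" using N_sub[OF N] by simp
  have GB: "G \<subseteq> Bij V" using subgroup.subset[OF G] by (simp add: B_carrier)
  have lat': "\<forall>u\<in>nbrs V E x. \<forall>w\<in>nbrs V E x. \<exists>g\<in>stab G x. g u = w" if "x \<in> V" for x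
    using lat that by (simp add: locally_arc_transitive_def)
  have fa: "\<forall>h\<in>stab N \<alpha>. \<forall>d\<in>nbrs V E \<alpha>. h d = d"
    using local_fix[OF fin G aut N aV(1) lat'[OF aV(1)] assms(8)] by blast
  have fb: "\<forall>h\<in>stab N \<beta>. \<forall>d\<in>nbrs V E \<beta>. h d = d"
    using local_fix[OF fin G aut N aV(2) lat'[OF aV(2)] assms(9)] by blast
  have fx: "\<forall>h\<in>stab N v. \<forall>d\<in>nbrs V E v. h d = d" if v: "v \<in> V" for v
  proof -
    obtain g where "g \<in> G" "v = g \<alpha> \<or> v = g \<beta>"
      using orbit_cover[OF sg con G aut lat ab v] by blast
    then show ?thesis using fix_transfer[OF G aut N aV(1) _ fa] fix_transfer[OF G aut N aV(2) _ fb]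
      by blast
  qed
  show ?thesis unfolding semiregular_def
  proof (intro ballI equalityI subsetI)
    fix v h assume v: "v \<in> V" and h: "h \<in> stab N v"
    have hB: "h \<in> Bij V" using h NG GB by (auto simp: stab_def)
    have all: "h w = w" if w: "w \<in> V" for w
    proof -
      have "E\<^sup>*\<^sup>* v w" using con v w by (auto simp: graph_connected_def)
      then have "h \<in> stab N w \<and> w \<in> V"
      proof (induction rule: rtranclp_induct)
        case base then show ?case using h v by simp
      next
        case (step y z)
        have zV: "z \<in> V" using sg step(2) by (auto simp: simple_graph_def)
        have "h z = z" using fx[of y] step zV by (auto simp: nbrs_def)
        then show ?case using step zV by (auto simp: stab_def)
      qed
      then show ?thesis by (simp add: stab_def)
    qed
    have "h = (\<lambda>x\<in>V. x)"
    proof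
      fix x show "h x = (\<lambda>x\<in>V. x) x"
        using all Bij_imp_extensional[OF hB] by (cases "x \<in> V") (auto simp: extensional_def)
    qed
    then show "h \<in> {\<one>\<^bsub>BijGroup V\<^esub>}" by (simp add: B_one)
  next
    fix v h assume v: "v \<in> V" and h: "h \<in> {\<one>\<^bsub>BijGroup V\<^esub>}"
    then show "h \<in> stab N v" using N_sub(2)[OF N] by (auto simp: stab_def B_one)
  qed
qed

end
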